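(* Let $\varepsilon>0$ and let $G:\mathbb{R}\to\mathbb{R}$ satisfy: $G\ge 0$ and $\mathrm{supp}(G)=\mathbb{R}$; $G\in W^{1,1}(\mathbb{R})\cap L^\infty(\mathbb{R})\cap C^2(\mathbb{R})$; $G(x)=g(|x|)$ with $g'(r)<0$ for all $r>0$, $g''(0)<0$, $\lim_{r\to+\infty}g(r)=0$; and $\int G=1$. Let $\rho_\infty\in L^2(\mathbb{R})\cap\mathcal{P}$ be a minimizer of $$E[\rho]=\frac{\varepsilon}{2}\int\rho^2(x)\,dx-\frac12\iint G(x-y)\rho(x)\rho(y)\,dy\,dx$$ over $L^2(\mathbb{R})\cap\mathcal{P}$ under the constraint that the center of mass $\int x\rho(x)\,dx$ is zero. Then $\rho_\infty$ is symmetric (even) and monotonically decreasing on $x>0$.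
   Context: $\mathcal{P}=\{\rho\in L^1(\mathbb{R}):\rho\ge0,\ \int_{\mathbb{R}}\rho\,dx=1\}$. *)

theory Defs
  imports "HOL-Analysis.Analysis"
begin

definition prob_density :: "(real \<Rightarrow> real) \<Rightarrow> bool" where
  "prob_density \<rho> \<longleftrightarrow> integrable lborel \<rho> \<and> (\<forall>x. 0 \<le> \<rho> x) \<and> (LINT x|lborel. \<rho> x) = 1"

definition L2 :: "(real \<Rightarrow> real) \<Rightarrow> bool" where
  "L2 \<rho> \<longleftrightarrow> \<rho> \<in> borel_measurable lborel \<and> integrable lborel (\<lambda>x. (\<rho> x)\<^sup>2)"

definition admissible :: "(real \<Rightarrow> real) \<Rightarrow> bool" where
  "admissible \<rho> \<longleftrightarrow> L2 \<rho> \<and> prob_density \<rho> \<and>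
     integrable lborel (\<lambda>x. x * \<rho> x) \<and> (LINT x|lborel. x * \<rho> x) = 0"

definition energy :: "real \<Rightarrow> (real \<Rightarrow> real) \<Rightarrow> (real \<Rightarrow> real) \<Rightarrow> real" where
  "energy \<epsilon> G \<rho> = \<epsilon> / 2 * (LINT x|lborel. (\<rho> x)\<^sup>2)
     - 1/2 * (LINT x|lborel. (LINT y|lborel. G (x - y) * \<rho> x * \<rho> y))"

end

theory Submission
  imports Defs
begin

lemma fold_integral:
  fixes \<phi> :: "real \<Rightarrow> real"
  assumes f: "integrable lborel \<phi>"
  shows "integrable lborel (\<lambda>x. indicator {a<..} x * (\<phi> x + \<phi> (2*a - x)))"
    and "(LINT x|lborel. \<phi> x) = (LINT x|lborel. indicator {a<..} x * (\<phi> x + \<phi> (2*a - x)))"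
proof -
  have r: "integrable lborel (\<lambda>x. \<phi> (2*a + (-1) * x))"
    by (rule lborel_integrable_real_affine[OF f]) simp
  then have r': "integrable lborel (\<lambda>x. \<phi> (2*a - x))" by simp
  have i1: "integrable lborel (\<lambda>x. indicator {a<..} x * \<phi> x)"
    using integrable_real_mult_indicator[OF _ f, of "{a<..}"] by (simp add: mult.commute)
  have i2: "integrable lborel (\<lambda>x. indicator {a<..} x * \<phi> (2*a - x))"
    using integrable_real_mult_indicator[OF _ r', of "{a<..}"] by (simp add: mult.commute)
  have i3: "integrable lborel (\<lambda>x. indicator {..<a} x * \<phi> x)"
    using integrable_real_mult_indicator[OF _ f, of "{..<a}"] by (simp add: mult.commute)
  show "integrable lborel (\<lambda>x. indicator {a<..} x * (\<phi> x + \<phi> (2*a - x)))"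
    using Bochner_Integration.integrable_add[OF i1 i2] by (simp add: distrib_left)
  have e2: "(LINT x|lborel. indicator {..<a} x * \<phi> x) = (LINT x|lborel. indicator {a<..} x * \<phi> (2*a - x))"
  proof -
    have "(LINT x|lborel. indicator {..<a} x * \<phi> x) = \<bar>-1\<bar> *\<^sub>R (LINT x|lborel. indicator {..<a} (2*a + (-1)*x) * \<phi> (2*a + (-1)*x))"
      by (rule lborel_integral_real_affine) simp
    also have "\<dots> = (LINT x|lborel. indicator {a<..} x * \<phi> (2*a - x))"
      by (simp add: indicator_def)
    finally show ?thesis .
  qed
  have [measurable]: "\<phi> \<in> borel_measurable borel" using borel_measurable_integrable[OF f] by simp
  have "(LINT x|lborel. \<phi> x) = (LINT x|lborel. indicator {a<..} x * \<phi> x + indicator {..<a} x * \<phi> x)"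
    by (intro integral_cong_AE) (measurable, auto simp: indicator_def intro!: eventually_mono[OF AE_lborel_singleton[of a]])
  also have "\<dots> = (LINT x|lborel. indicator {a<..} x * \<phi> x) + (LINT x|lborel. indicator {..<a} x * \<phi> x)"
    by (rule Bochner_Integration.integral_add[OF i1 i3])
  also have "\<dots> = (LINT x|lborel. indicator {a<..} x * \<phi> x) + (LINT x|lborel. indicator {a<..} x * \<phi> (2*a - x))"
    using e2 by simp
  also have "\<dots> = (LINT x|lborel. indicator {a<..} x * \<phi> x + indicator {a<..} x * \<phi> (2*a - x))"
    by (rule Bochner_Integration.integral_add[OF i1 i2, symmetric])
  finally show "(LINT x|lborel. \<phi> x) = (LINT x|lborel. indicator {a<..} x * (\<phi> x + \<phi> (2*a - x)))"
    by (simp add: distrib_left)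
qed



lemma conv_null:
  fixes U V :: "real set"
  assumes [measurable]: "U \<in> sets borel" "V \<in> sets borel"
    and H: "\<And>a. AE x in lborel. \<not> (x \<in> U \<and> 2*a - x \<in> V)"
  shows "emeasure lborel U = 0 \<or> emeasure lborel V = 0"
proof -
  have z: "(\<integral>\<^sup>+x. indicator U x * indicator V (2*a - x) \<partial>lborel) = (0::ennreal)" for a
  proof (subst nn_integral_0_iff_AE)
    show "(\<lambda>x. indicator U x * indicator V (2*a - x) :: ennreal) \<in> borel_measurable lborel" by measurable
    show "AE x in lborel. (indicator U x * indicator V (2*a - x) :: ennreal) = 0"
      using H[of a] by eventually_elim (auto simp: indicator_def)
  qed
  have inner: "2 * (\<integral>\<^sup>+a. indicator V (2*a - x) \<partial>lborel) = emeasure lborel V" for x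
  proof -
    have "emeasure lborel V = (\<integral>\<^sup>+a. indicator V a \<partial>lborel)" by simp
    also have "\<dots> = ennreal \<bar>2\<bar> * (\<integral>\<^sup>+a. indicator V (-x + 2 * a) \<partial>lborel)"
      by (rule nn_integral_real_affine) auto
    finally show ?thesis by simp
  qed
  have "0 = (\<integral>\<^sup>+a. (\<integral>\<^sup>+x. indicator U x * indicator V (2*a - x) \<partial>lborel) \<partial>lborel)"
    by (simp add: z)
  also have "\<dots> = (\<integral>\<^sup>+x. (\<integral>\<^sup>+a. indicator U x * indicator V (2*a - x) \<partial>lborel) \<partial>lborel)"
    by (rule lborel_pair.Fubini') measurable
  also have "\<dots> = (\<integral>\<^sup>+x. indicator U x * (\<integral>\<^sup>+a. indicator V (2*a - x) \<partial>lborel) \<partial>lborel)"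
    by (intro nn_integral_cong nn_integral_cmult) measurable
  finally have "0 = 2 * (\<integral>\<^sup>+x. indicator U x * (\<integral>\<^sup>+a. indicator V (2*a - x) \<partial>lborel) \<partial>lborel)"
    by simp
  also have "\<dots> = (\<integral>\<^sup>+x. 2 * (indicator U x * (\<integral>\<^sup>+a. indicator V (2*a - x) \<partial>lborel)) \<partial>lborel)"
    by (rule nn_integral_cmult[symmetric]) measurable
  also have "\<dots> = (\<integral>\<^sup>+x. indicator U x * emeasure lborel V \<partial>lborel)"
    by (intro nn_integral_cong) (metis inner mult.left_commute)
  also have "\<dots> = emeasure lborel U * emeasure lborel V"
    by (subst nn_integral_multc) auto
  finally show ?thesis by simp
qed

lemma levelset:
  fixes \<rho> :: "real \<Rightarrow> real" and l :: real
  assumes [measurable]: "\<rho> \<in> borel_measurable borel"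
    and nn: "\<forall>x. 0 \<le> \<rho> x" and int: "integrable lborel \<rho>"
    and mono: "\<forall>a>0. AE x in lborel. a < x \<longrightarrow> \<rho> x \<le> \<rho> (2*a - x)"
    and lam: "0 < l"
  shows "AE x in lborel. 0 < x \<longrightarrow> (l < \<rho> x \<longleftrightarrow> x < measure lborel {y. 0<y \<and> l<\<rho> y})"
proof -
  define A where "A = {y. 0<y \<and> l<\<rho> y}"
  define r where "r = measure lborel A"
  have [measurable]: "A \<in> sets borel" unfolding A_def by measurable
  have "emeasure lborel A \<le> emeasure lborel {x\<in>space lborel. \<rho> x \<ge> l}"
    by (rule emeasure_mono) (auto simp: A_def)
  also have "\<dots> \<le> (1/l) * (\<integral>x. \<rho> x \<partial>lborel)"
    by (rule integral_Markov_inequality) (use int nn lam in auto)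
  also have "\<dots> < \<infinity>" by simp
  finally have finA: "emeasure lborel A \<noteq> \<infinity>" by simp
  have r0: "0 \<le> r" unfolding r_def by simp
  define U where "U = A \<inter> {r<..}"
  define V where "V = {0<..r} - A"
  have Am: "A \<in> sets borel" by fact
  have [measurable]: "U \<in> sets borel" unfolding U_def using Am by (intro sets.Int) auto
  have [measurable]: "V \<in> sets borel" unfolding V_def using Am by (intro sets.Diff) auto
  have H: "AE x in lborel. \<not> (x \<in> U \<and> 2*a - x \<in> V)" for a
  proof (cases "a > 0")
    case True
    from mono True have "AE x in lborel. a < x \<longrightarrow> \<rho> x \<le> \<rho> (2*a - x)" by blast
    then show ?thesis
    proof eventually_elim
      case (elim x)
      show ?case
      proof
        assume *: "x \<in> U \<and> 2*a - x \<in> V"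
        then have "a < x" by (auto simp: U_def V_def)
        with elim have "\<rho> x \<le> \<rho> (2*a - x)" by blast
        with * show False by (auto simp: U_def V_def A_def)
      qed
    qed
  next
    case False
    show ?thesis
      by (rule AE_I2) (use False r0 in \<open>auto simp: U_def V_def A_def\<close>)
  qed
  have cn: "emeasure lborel U = 0 \<or> emeasure lborel V = 0"
    by (rule conv_null) (use H in auto)
  have finU: "emeasure lborel U \<noteq> \<infinity>"
    using emeasure_mono[of U A lborel] finA by (auto simp: U_def top_unique)
  have finA2: "emeasure lborel (A \<inter> {0<..r}) \<noteq> \<infinity>"
    using emeasure_mono[of "A \<inter> {0<..r}" A lborel] finA by (auto simp: top_unique)
  have finI: "emeasure lborel {0<..r} \<noteq> \<infinity>" using r0 by simp
  have finV: "emeasure lborel V \<noteq> \<infinity>"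
    using emeasure_mono[of V "{0<..r}" lborel] finI by (auto simp: V_def top_unique)
  have eA: "A = (A \<inter> {0<..r}) \<union> U" by (auto simp: U_def A_def)
  have eI: "{0<..r} = (A \<inter> {0<..r}) \<union> V" by (auto simp: V_def)
  have m1': "measure lborel A = measure lborel (A \<inter> {0<..r}) + measure lborel U"
    by (subst eA, rule measure_Union) (use finU finA2 in \<open>auto simp: U_def\<close>)
  have m1: "r = measure lborel (A \<inter> {0<..r}) + measure lborel U" using m1' by (simp add: r_def)
  have m2: "r = measure lborel (A \<inter> {0<..r}) + measure lborel V"
  proof -
    have "r = measure lborel {0<..r}" using r0 by simp
    also have "\<dots> = measure lborel (A \<inter> {0<..r}) + measure lborel V"
      by (subst eI, rule measure_Union) (use finV finA2 in \<open>auto simp: V_def\<close>)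
    finally show ?thesis .
  qed
  have mUV: "measure lborel U = measure lborel V" using m1 m2 by simp
  have eU: "emeasure lborel U = ennreal (measure lborel U)" using finU by (simp add: emeasure_eq_ennreal_measure)
  have eV: "emeasure lborel V = ennreal (measure lborel V)" using finV by (simp add: emeasure_eq_ennreal_measure)
  have "measure lborel U = 0 \<or> measure lborel V = 0" using cn eU eV measure_nonneg[of lborel U] measure_nonneg[of lborel V] by (simp add: ennreal_eq_0_iff)
  then have "measure lborel U = 0 \<and> measure lborel V = 0" using mUV by simp
  then have nU: "emeasure lborel U = 0" and nV: "emeasure lborel V = 0" using eU eV by simp_all
  have "AE x in lborel. x \<notin> U" by (rule AE_not_in) (use nU in \<open>auto intro: null_setsI\<close>)
  moreover have "AE x in lborel. x \<notin> V" by (rule AE_not_in) (use nV in \<open>auto intro: null_setsI\<close>)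
  moreover have "AE x in lborel. x \<noteq> r" by (rule AE_lborel_singleton)
  ultimately have "AE x in lborel. 0 < x \<longrightarrow> (l < \<rho> x \<longleftrightarrow> x < r)"
  proof eventually_elim
    case (elim x)
    then show ?case by (cases "x < r") (auto simp: U_def V_def A_def)
  qed
  then show ?thesis by (simp add: r_def A_def)
qed

lemma sup_rats:
  fixes v :: real
  assumes "0 \<le> v"
  shows "Sup (insert 0 {q. q \<in> \<rat> \<and> 0 < q \<and> q < v}) = v"
proof (rule cSup_eq_non_empty)
  show "insert 0 {q. q \<in> \<rat> \<and> 0 < q \<and> q < v} \<noteq> {}" by simp
  show "\<And>x. x \<in> insert 0 {q. q \<in> \<rat> \<and> 0 < q \<and> q < v} \<Longrightarrow> x \<le> v" using assms by auto
  fix y assume y: "\<And>x. x \<in> insert 0 {q. q \<in> \<rat> \<and> 0 < q \<and> q < v} \<Longrightarrow> x \<le> y"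
  show "v \<le> y"
  proof (rule ccontr)
    assume "\<not> v \<le> y"
    then have "max 0 y < v" using y[of 0] by auto
    then obtain q where q: "q \<in> \<rat>" "max 0 y < q" "q < v" using Rats_dense_in_real by blast
    then have "q \<le> y" using y[of q] by auto
    with q show False by auto
  qed
qed

lemma markov_R:
  fixes \<rho> :: "real \<Rightarrow> real"
  assumes [measurable]: "\<rho> \<in> borel_measurable borel"
    and nn: "\<forall>x. 0 \<le> \<rho> x" and int: "integrable lborel \<rho>" and q: "0 < q"
  shows "measure lborel {y. 0<y \<and> q<\<rho> y} \<le> (LINT x|lborel. \<rho> x) / q"
proof -
  have m: "{x\<in>space lborel. \<rho> x \<ge> q} \<in> sets lborel" by measurable
  have "emeasure lborel {x\<in>space lborel. \<rho> x \<ge> q} \<le> (1/q) * (\<integral>x. \<rho> x \<partial>lborel)"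
    by (rule integral_Markov_inequality) (use int nn q in auto)
  also have "\<dots> < \<infinity>" by (simp add: ennreal_mult_less_top)
  finally have "{x\<in>space lborel. \<rho> x \<ge> q} \<in> fmeasurable lborel"
    using m by (intro fmeasurableI) auto
  then have "measure lborel {y. 0<y \<and> q<\<rho> y} \<le> measure lborel {x\<in>space lborel. \<rho> x \<ge> q}"
    by (intro measure_mono_fmeasurable) auto
  also have "\<dots> \<le> (\<integral>x. \<rho> x \<partial>lborel) / q"
    by (rule integral_Markov_inequality_measure[of _ _ "UNIV"]) (use int nn q in auto)
  finally show ?thesis .
qed

lemma monotone_rep:
  fixes \<rho> :: "real \<Rightarrow> real"
  assumes [measurable]: "\<rho> \<in> borel_measurable borel"
    and nn: "\<forall>x. 0 \<le> \<rho> x" and int: "integrable lborel \<rho>"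
    and mono: "\<forall>a>0. AE x in lborel. a < x \<longrightarrow> \<rho> x \<le> \<rho> (2*a - x)"
  shows "\<exists>F. (AE x in lborel. 0 < x \<longrightarrow> \<rho> x = F x) \<and> (\<forall>x y. 0 < x \<longrightarrow> x \<le> y \<longrightarrow> F y \<le> F x)"
proof -
  define R where "R q = measure lborel {y. 0<y \<and> q<\<rho> y}" for q
  define C where "C = (LINT x|lborel. \<rho> x)"
  define S where "S x = {q. q \<in> \<rat> \<and> 0 < q \<and> x < R q}" for x
  define F where "F x = Sup (insert 0 (S x))" for x
  have RC: "R q \<le> C / q" if "0 < q" for q
    unfolding R_def C_def by (rule markov_R) (use assms that in auto)
  have bdd: "bdd_above (insert 0 (S x))" if "0 < x" for x
  proof (rule bdd_aboveI[of _ "max 0 (C / x)"])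
    fix q assume "q \<in> insert 0 (S x)"
    then consider "q = 0" | "0 < q" "x < R q" by (auto simp: S_def)
    then show "q \<le> max 0 (C / x)"
    proof cases
      case 2
      then have "x < C / q" using RC[of q] by linarith
      then have "x * q < C" using 2 by (simp add: field_simps)
      then have "q < C / x" using \<open>0 < x\<close> by (simp add: field_simps mult.commute)
      then show ?thesis by simp
    qed simp
  qed
  have mon: "F y \<le> F x" if "0 < x" "x \<le> y" for x y
    unfolding F_def
    by (rule cSup_subset_mono) (use bdd[OF that(1)] that in \<open>auto simp: S_def\<close>)
  have "\<forall>q\<in>\<rat>. AE x in lborel. 0 < q \<longrightarrow> 0 < x \<longrightarrow> (q < \<rho> x \<longleftrightarrow> x < R q)"
  proof
    fix q :: real assume "q \<in> \<rat>"
    show "AE x in lborel. 0 < q \<longrightarrow> 0 < x \<longrightarrow> (q < \<rho> x \<longleftrightarrow> x < R q)"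
    proof (cases "0 < q")
      case True
      show ?thesis using levelset[OF assms True] unfolding R_def by (auto elim: eventually_mono)
    qed simp
  qed
  then have "AE x in lborel. \<forall>q\<in>\<rat>. 0 < q \<longrightarrow> 0 < x \<longrightarrow> (q < \<rho> x \<longleftrightarrow> x < R q)"
    by (subst AE_ball_countable) (auto intro: countable_rat)
  then have "AE x in lborel. 0 < x \<longrightarrow> \<rho> x = F x"
  proof eventually_elim
    case (elim x)
    show ?case
    proof
      assume "0 < x"
      then have "S x = {q. q \<in> \<rat> \<and> 0 < q \<and> q < \<rho> x}" using elim by (auto simp: S_def)
      then show "\<rho> x = F x" unfolding F_def using sup_rats[of "\<rho> x"] nn by simp
    qed
  qed
  then show ?thesis using mon by blast
qed



definition Kf :: "(real \<Rightarrow> real) \<Rightarrow> (real \<Rightarrow> real) \<Rightarrow> real \<Rightarrow> real \<Rightarrow> real \<Rightarrow> real" where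
  "Kf G r a x y = G (x - y) * (r x * r y + r (2*a - x) * r (2*a - y))
     + G (x + y - 2*a) * (r x * r (2*a - y) + r (2*a - x) * r y)"

lemma inner_integrable:
  fixes G r :: "real \<Rightarrow> real"
  assumes [measurable]: "G \<in> borel_measurable borel" "r \<in> borel_measurable borel"
    and Gb: "\<forall>x. \<bar>G x\<bar> \<le> M" and ri: "integrable lborel r"
  shows "integrable lborel (\<lambda>y. G (x - y) * r x * r y)"
proof (rule Bochner_Integration.integrable_bound)
  show "integrable lborel (\<lambda>y. M * \<bar>r x\<bar> * \<bar>r y\<bar>)" using ri by simp
  show "(\<lambda>y. G (x - y) * r x * r y) \<in> borel_measurable lborel" by measurable
  show "AE y in lborel. norm (G (x - y) * r x * r y) \<le> norm (M * \<bar>r x\<bar> * \<bar>r y\<bar>)"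
  proof (rule AE_I2)
    fix y
    have M0: "0 \<le> M" using Gb[rule_format, of 0] by linarith
    have "\<bar>G (x - y) * r x * r y\<bar> = \<bar>G (x - y)\<bar> * (\<bar>r x\<bar> * \<bar>r y\<bar>)" by (simp add: abs_mult)
    also have "\<dots> \<le> M * (\<bar>r x\<bar> * \<bar>r y\<bar>)" by (rule mult_right_mono) (use Gb in auto)
    finally show "norm (G (x - y) * r x * r y) \<le> norm (M * \<bar>r x\<bar> * \<bar>r y\<bar>)"
      using M0 by (simp add: abs_mult mult.assoc)
  qed
qed

lemma outer_integrable:
  fixes G r :: "real \<Rightarrow> real"
  assumes [measurable]: "G \<in> borel_measurable borel" "r \<in> borel_measurable borel"
    and Gb: "\<forall>x. \<bar>G x\<bar> \<le> M" and ri: "integrable lborel r"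
  shows "integrable lborel (\<lambda>x. LINT y|lborel. G (x - y) * r x * r y)"
proof (rule Bochner_Integration.integrable_bound)
  show "integrable lborel (\<lambda>x. M * (LINT y|lborel. \<bar>r y\<bar>) * \<bar>r x\<bar>)" using ri by simp
  show "(\<lambda>x. LINT y|lborel. G (x - y) * r x * r y) \<in> borel_measurable lborel" by measurable
  show "AE x in lborel. norm (LINT y|lborel. G (x - y) * r x * r y) \<le> norm (M * (LINT y|lborel. \<bar>r y\<bar>) * \<bar>r x\<bar>)"
  proof (rule AE_I2)
    fix x
    have M0: "0 \<le> M" using Gb[rule_format, of 0] by linarith
    have "norm (LINT y|lborel. G (x - y) * r x * r y) \<le> (LINT y|lborel. norm (G (x - y) * r x * r y))"
      by (rule integral_norm_bound)
    also have "\<dots> \<le> (LINT y|lborel. M * \<bar>r x\<bar> * \<bar>r y\<bar>)"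
    proof (rule integral_mono)
      show "integrable lborel (\<lambda>y. norm (G (x - y) * r x * r y))"
        using inner_integrable[OF assms] by simp
      show "integrable lborel (\<lambda>y. M * \<bar>r x\<bar> * \<bar>r y\<bar>)" using ri by simp
      fix y
      have "\<bar>G (x - y) * r x * r y\<bar> = \<bar>G (x - y)\<bar> * (\<bar>r x\<bar> * \<bar>r y\<bar>)" by (simp add: abs_mult)
      also have "\<dots> \<le> M * (\<bar>r x\<bar> * \<bar>r y\<bar>)" by (rule mult_right_mono) (use Gb in auto)
      finally show "norm (G (x - y) * r x * r y) \<le> M * \<bar>r x\<bar> * \<bar>r y\<bar>" by (simp add: mult.assoc)
    qed
    also have "\<dots> = M * (LINT y|lborel. \<bar>r y\<bar>) * \<bar>r x\<bar>" by (simp add: mult_ac)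
    finally show "norm (LINT y|lborel. G (x - y) * r x * r y) \<le> norm (M * (LINT y|lborel. \<bar>r y\<bar>) * \<bar>r x\<bar>)"
      using M0 by (simp add: integral_nonneg_AE)
  qed
qed

lemma I_fold:
  fixes G r :: "real \<Rightarrow> real"
  assumes [measurable]: "G \<in> borel_measurable borel" "r \<in> borel_measurable borel"
    and Gb: "\<forall>x. \<bar>G x\<bar> \<le> M" and ri: "integrable lborel r"
    and Ge: "\<forall>x. G (- x) = G x"
  shows "\<And>x. integrable lborel (\<lambda>y. indicator {a<..} y * Kf G r a x y)"
    and "integrable lborel (\<lambda>x. indicator {a<..} x * (LINT y|lborel. indicator {a<..} y * Kf G r a x y))"
    and "(LINT x|lborel. (LINT y|lborel. G (x - y) * r x * r y))
          = (LINT x|lborel. indicator {a<..} x * (LINT y|lborel. indicator {a<..} y * Kf G r a x y))"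
proof -
  define \<Phi> where "\<Phi> x = (LINT y|lborel. G (x - y) * r x * r y)" for x
  have ii: "integrable lborel (\<lambda>y. G (x - y) * r x * r y)" for x
    by (rule inner_integrable[OF assms(1-4)])
  have oi: "integrable lborel \<Phi>" unfolding \<Phi>_def by (rule outer_integrable[OF assms(1-4)])
  have Phi_fold: "\<Phi> x = (LINT y|lborel. indicator {a<..} y * (G (x - y) * r x * r y + G (x - (2*a - y)) * r x * r (2*a - y)))" for x
    unfolding \<Phi>_def using fold_integral(2)[OF ii[of x], of a] by simp
  have Phi_int: "integrable lborel (\<lambda>y. indicator {a<..} y * (G (x - y) * r x * r y + G (x - (2*a - y)) * r x * r (2*a - y)))" for x
    using fold_integral(1)[OF ii[of x], of a] by simp
  have Keq: "indicator {a<..} y * Kf G r a x y =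
     indicator {a<..} y * (G (x - y) * r x * r y + G (x - (2*a - y)) * r x * r (2*a - y))
     + indicator {a<..} y * (G ((2*a - x) - y) * r (2*a - x) * r y + G ((2*a - x) - (2*a - y)) * r (2*a - x) * r (2*a - y))" for x y
  proof -
    have e1: "G (x - (2*a - y)) = G (x + y - 2*a)" by (simp add: algebra_simps)
    have e2: "G ((2*a - x) - y) = G (x + y - 2*a)" using Ge[rule_format, of "x + y - 2*a"] by (simp add: algebra_simps)
    have e3: "G ((2*a - x) - (2*a - y)) = G (x - y)" using Ge[rule_format, of "x - y"] by (simp add: algebra_simps)
    show ?thesis unfolding Kf_def e1 e2 e3 by (simp add: algebra_simps)
  qed
  show inK: "integrable lborel (\<lambda>y. indicator {a<..} y * Kf G r a x y)" for x
    unfolding Keq by (intro Bochner_Integration.integrable_add Phi_int)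
  have sumK: "\<Phi> x + \<Phi> (2*a - x) = (LINT y|lborel. indicator {a<..} y * Kf G r a x y)" for x
    unfolding Keq Phi_fold[of x] Phi_fold[of "2*a - x"]
    by (rule Bochner_Integration.integral_add[symmetric]) (intro Phi_int)+
  have "(LINT x|lborel. \<Phi> x) = (LINT x|lborel. indicator {a<..} x * (\<Phi> x + \<Phi> (2*a - x)))"
    by (rule fold_integral(2)[OF oi])
  then show "(LINT x|lborel. (LINT y|lborel. G (x - y) * r x * r y))
          = (LINT x|lborel. indicator {a<..} x * (LINT y|lborel. indicator {a<..} y * Kf G r a x y))"
    unfolding \<Phi>_def[symmetric] sumK by simp
  show "integrable lborel (\<lambda>x. indicator {a<..} x * (LINT y|lborel. indicator {a<..} y * Kf G r a x y))"
    using fold_integral(1)[OF oi, of a] unfolding sumK by simp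
qed

definition pol :: "real \<Rightarrow> (real \<Rightarrow> real) \<Rightarrow> real \<Rightarrow> real" where
  "pol a r x = (if a < x then max (r x) (r (2*a - x)) else if x < a then min (r x) (r (2*a - x)) else r x)"

lemma pol_right: "a < x \<Longrightarrow> pol a r x = max (r x) (r (2*a - x))"
  by (simp add: pol_def)

lemma pol_left: "a < x \<Longrightarrow> pol a r (2*a - x) = min (r x) (r (2*a - x))"
  by (simp add: pol_def min.commute)

lemma pol_cases: "pol a r x = r x \<or> pol a r x = r (2*a - x)"
  by (auto simp: pol_def max_def min_def)

lemma pol_meas[measurable]:
  assumes [measurable]: "r \<in> borel_measurable borel"
  shows "pol a r \<in> borel_measurable borel"
  unfolding pol_def by measurable

lemma reflect_integrable:
  fixes f :: "real \<Rightarrow> real"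
  assumes "integrable lborel f"
  shows "integrable lborel (\<lambda>x. f (2*a - x))"
  using lborel_integrable_real_affine[OF assms, of "-1" "2*a"] by simp

lemma pol_integrable:
  fixes F r :: "real \<Rightarrow> real"
  assumes [measurable]: "F \<in> borel_measurable borel" "r \<in> borel_measurable borel"
    and i: "integrable lborel (\<lambda>x. F (r x))"
  shows "integrable lborel (\<lambda>x. F (pol a r x))"
proof (rule Bochner_Integration.integrable_bound)
  show "integrable lborel (\<lambda>x. \<bar>F (r x)\<bar> + \<bar>F (r (2*a - x))\<bar>)"
    using i reflect_integrable[OF i, of a] by (intro Bochner_Integration.integrable_add) auto
  show "(\<lambda>x. F (pol a r x)) \<in> borel_measurable lborel" by measurable
  show "AE x in lborel. norm (F (pol a r x)) \<le> norm (\<bar>F (r x)\<bar> + \<bar>F (r (2*a - x))\<bar>)"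
  proof (rule AE_I2)
    fix x show "norm (F (pol a r x)) \<le> norm (\<bar>F (r x)\<bar> + \<bar>F (r (2*a - x))\<bar>)"
      using pol_cases[of a r x] by (elim disjE) auto
  qed
qed

lemma pol_integral:
  fixes F r :: "real \<Rightarrow> real"
  assumes [measurable]: "F \<in> borel_measurable borel" "r \<in> borel_measurable borel"
    and i: "integrable lborel (\<lambda>x. F (r x))"
  shows "(LINT x|lborel. F (pol a r x)) = (LINT x|lborel. F (r x))"
proof -
  have i2: "integrable lborel (\<lambda>x. F (pol a r x))" by (rule pol_integrable[OF assms])
  have "(LINT x|lborel. F (pol a r x)) = (LINT x|lborel. indicator {a<..} x * (F (pol a r x) + F (pol a r (2*a - x))))"
    by (rule fold_integral(2)[OF i2])
  also have "\<dots> = (LINT x|lborel. indicator {a<..} x * (F (r x) + F (r (2*a - x))))"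
  proof (rule Bochner_Integration.integral_cong[OF refl])
    fix x show "indicator {a<..} x * (F (pol a r x) + F (pol a r (2*a - x))) = indicator {a<..} x * (F (r x) + F (r (2*a - x)))"
    proof (cases "a < x")
      case True
      then show ?thesis by (simp add: pol_right pol_left max_def min_def)
    qed simp
  qed
  also have "\<dots> = (LINT x|lborel. F (r x))"
    by (rule fold_integral(2)[OF i, symmetric])
  finally show ?thesis .
qed

lemma alg4:
  fixes A B X Y Z W u u1 v v1 :: real
  assumes "X + Y = u + u1" "Z + W = v + v1"
  shows "A * (X * Z + Y * W) + B * (X * W + Y * Z) - (A * (u * v + u1 * v1) + B * (u * v1 + u1 * v))
     = (A - B) * (X * Z + Y * W - u * v - u1 * v1)"
proof -
  have Y: "Y = u + u1 - X" and W: "W = v + v1 - Z" using assms by linarith+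
  show ?thesis unfolding Y W by (simp add: algebra_simps)
qed

lemma K_diff:
  assumes "a < x" "a < y"
  shows "Kf G (pol a r) a x y - Kf G r a x y = (G (x - y) - G (x + y - 2*a)) *
    (max (r x) (r (2*a - x)) * max (r y) (r (2*a - y)) + min (r x) (r (2*a - x)) * min (r y) (r (2*a - y))
      - r x * r y - r (2*a - x) * r (2*a - y))"
  unfolding Kf_def pol_right[OF assms(1)] pol_right[OF assms(2)]
      pol_left[OF assms(1)] pol_left[OF assms(2)]
  by (rule alg4) (auto simp: max_def min_def)

lemma Delta_nonneg:
  fixes u u1 v v1 :: real
  shows "0 \<le> max u u1 * max v v1 + min u u1 * min v v1 - u * v - u1 * v1"
proof (cases "u \<le> u1"; cases "v \<le> v1")
  assume "u \<le> u1" "v \<le> v1" then show ?thesis by simp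
next
  assume "u \<le> u1" "\<not> v \<le> v1"
  then have "0 \<le> (u1 - u) * (v - v1)" by simp
  with \<open>u \<le> u1\<close> \<open>\<not> v \<le> v1\<close> show ?thesis by (simp add: algebra_simps)
next
  assume "\<not> u \<le> u1" "v \<le> v1"
  then have "0 \<le> (u - u1) * (v1 - v)" by simp
  with \<open>\<not> u \<le> u1\<close> \<open>v \<le> v1\<close> show ?thesis by (simp add: algebra_simps)
next
  assume "\<not> u \<le> u1" "\<not> v \<le> v1" then show ?thesis by simp
qed

lemma Delta_pos:
  fixes u u1 v v1 :: real
  assumes "u1 < u" "v < v1"
  shows "0 < max u u1 * max v v1 + min u u1 * min v v1 - u * v - u1 * v1"
proof -
  have "0 < (u - u1) * (v1 - v)" using assms by simp
  with assms show ?thesis by (simp add: algebra_simps)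
qed

lemma dichotomy:
  fixes G r :: "real \<Rightarrow> real"
  assumes [measurable]: "G \<in> borel_measurable borel" "r \<in> borel_measurable borel"
    and Gb: "\<forall>x. \<bar>G x\<bar> \<le> M" and ri: "integrable lborel r"
    and Ge: "\<forall>x. G (- x) = G x"
    and Gs: "\<forall>s t. 0 \<le> s \<longrightarrow> s < t \<longrightarrow> G t < G s"
    and le: "(LINT x|lborel. (LINT y|lborel. G (x - y) * pol a r x * pol a r y))
             \<le> (LINT x|lborel. (LINT y|lborel. G (x - y) * r x * r y))"
  shows "(AE x in lborel. a < x \<longrightarrow> r (2*a - x) \<le> r x) \<or> (AE x in lborel. a < x \<longrightarrow> r x \<le> r (2*a - x))"
proof (rule ccontr)
  assume nc: "\<not> ?thesis"
  have si: "integrable lborel (pol a r)"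
    using pol_integrable[of "\<lambda>x. x" r a] ri by simp
  note Fr = I_fold[OF assms(1,2) Gb ri Ge, of a]
  note Fs = I_fold[OF assms(1) pol_meas[OF assms(2)] Gb si Ge, of a]
  define D where "D x y = indicator {a<..} y * (Kf G (pol a r) a x y - Kf G r a x y)" for x y
  define Q where "Q x = indicator {a<..} x * (LINT y|lborel. D x y)" for x
  have Dint: "integrable lborel (D x)" for x
    using Bochner_Integration.integrable_diff[OF Fs(1)[of x] Fr(1)[of x]]
    unfolding D_def by (simp add: algebra_simps)
  have ABpos: "G (x + y - 2*a) < G (x - y)" if "a < x" "a < y" for x y
  proof -
    have "G (x - y) = G \<bar>x - y\<bar>" using Ge by (cases "0 \<le> x - y") (auto, metis minus_diff_eq)
    moreover have "G (x + y - 2*a) < G \<bar>x - y\<bar>" using Gs that by auto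
    ultimately show ?thesis by simp
  qed
  have Dnn: "0 \<le> D x y" if "a < x" for x y
  proof (cases "a < y")
    case True
    have "0 \<le> (G (x - y) - G (x + y - 2*a)) *
        (max (r x) (r (2*a - x)) * max (r y) (r (2*a - y)) + min (r x) (r (2*a - x)) * min (r y) (r (2*a - y))
          - r x * r y - r (2*a - x) * r (2*a - y))"
      using ABpos[OF that True] by (intro mult_nonneg_nonneg Delta_nonneg) auto
    then show ?thesis unfolding D_def K_diff[OF that True] using True by simp
  qed (simp add: D_def)
  have Qeq: "Q x = indicator {a<..} x * (LINT y|lborel. indicator {a<..} y * Kf G (pol a r) a x y)
                 - indicator {a<..} x * (LINT y|lborel. indicator {a<..} y * Kf G r a x y)" for x
  proof -
    have "(LINT y|lborel. D x y) = (LINT y|lborel. indicator {a<..} y * Kf G (pol a r) a x y - indicator {a<..} y * Kf G r a x y)"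
      unfolding D_def by (simp add: algebra_simps)
    also have "\<dots> = (LINT y|lborel. indicator {a<..} y * Kf G (pol a r) a x y) - (LINT y|lborel. indicator {a<..} y * Kf G r a x y)"
      by (rule Bochner_Integration.integral_diff[OF Fs(1)[of x] Fr(1)[of x]])
    finally show ?thesis unfolding Q_def by (simp add: right_diff_distrib)
  qed
  have Qint: "integrable lborel Q"
    unfolding Qeq by (rule Bochner_Integration.integrable_diff[OF Fs(2) Fr(2)])
  have Qnn: "0 \<le> Q x" for x
    unfolding Q_def by (cases "a < x") (auto intro!: integral_nonneg_AE simp: Dnn)
  have "(LINT x|lborel. Q x) = (LINT x|lborel. (LINT y|lborel. G (x - y) * pol a r x * pol a r y))
          - (LINT x|lborel. (LINT y|lborel. G (x - y) * r x * r y))"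
    unfolding Qeq Fr(3) Fs(3) by (rule Bochner_Integration.integral_diff[OF Fs(2) Fr(2)])
  with le have "(LINT x|lborel. Q x) \<le> 0" by simp
  moreover have "0 \<le> (LINT x|lborel. Q x)" by (rule integral_nonneg_AE) (simp add: Qnn)
  ultimately have "(LINT x|lborel. Q x) = 0" by simp
  then have AEQ: "AE x in lborel. Q x = 0"
    using integral_nonneg_eq_0_iff_AE[OF Qint] Qnn by simp
  from nc have n1: "\<not> (AE x in lborel. a < x \<longrightarrow> r (2*a - x) \<le> r x)"
    and n2: "\<not> (AE x in lborel. a < x \<longrightarrow> r x \<le> r (2*a - x))" by auto
  obtain x0 where x0: "a < x0" "r (2*a - x0) < r x0" "Q x0 = 0"
  proof -
    have "\<not> (\<forall>x. Q x = 0 \<longrightarrow> (a < x \<longrightarrow> r x \<le> r (2*a - x)))"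
    proof
      assume "\<forall>x. Q x = 0 \<longrightarrow> (a < x \<longrightarrow> r x \<le> r (2*a - x))"
      then have "AE x in lborel. a < x \<longrightarrow> r x \<le> r (2*a - x)"
        using AEQ by (auto elim: eventually_mono)
      with n2 show False by simp
    qed
    then show ?thesis using that by force
  qed
  have "(LINT y|lborel. D x0 y) = 0" using x0 unfolding Q_def by simp
  then have AED: "AE y in lborel. D x0 y = 0"
    using integral_nonneg_eq_0_iff_AE[OF Dint[of x0]] Dnn[OF x0(1)] by simp
  have "AE y in lborel. a < y \<longrightarrow> r (2*a - y) \<le> r y"
    using AED
  proof eventually_elim
    case (elim y)
    show ?case
    proof (rule impI, rule ccontr)
      assume y: "a < y" "\<not> r (2 * a - y) \<le> r y"
      have "0 < (G (x0 - y) - G (x0 + y - 2*a)) *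
        (max (r x0) (r (2*a - x0)) * max (r y) (r (2*a - y)) + min (r x0) (r (2*a - x0)) * min (r y) (r (2*a - y))
          - r x0 * r y - r (2*a - x0) * r (2*a - y))"
        using ABpos[OF x0(1) y(1)] Delta_pos[of "r (2*a - x0)" "r x0" "r y" "r (2*a - y)"] x0 y
        by (intro mult_pos_pos) auto
      then have "0 < D x0 y" unfolding D_def K_diff[OF x0(1) y(1)] using y by simp
      with elim show False by simp
    qed
  qed
  with n1 show False by simp
qed



lemma shift_integral:
  fixes f :: "real \<Rightarrow> real"
  shows "(LINT x|lborel. f (x + m)) = (LINT x|lborel. f x)"
  using lborel_integral_real_affine[of 1 f m] by (simp add: add.commute)

lemma shift_integrable:
  fixes f :: "real \<Rightarrow> real"
  shows "integrable lborel (\<lambda>x. f (x + m)) \<longleftrightarrow> integrable lborel f"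
  using lborel_integrable_real_affine_iff[of 1 f m] by (simp add: add.commute)

lemma I_shift:
  fixes G r :: "real \<Rightarrow> real"
  shows "(LINT x|lborel. (LINT y|lborel. G (x - y) * r (x + m) * r (y + m)))
       = (LINT x|lborel. (LINT y|lborel. G (x - y) * r x * r y))"
proof -
  have "(LINT y|lborel. G (x - y) * r (x + m) * r (y + m)) = (LINT y|lborel. G ((x + m) - y) * r (x + m) * r y)" for x
    using shift_integral[of "\<lambda>y. G ((x + m) - y) * r (x + m) * r y" m] by simp
  then have "(LINT x|lborel. (LINT y|lborel. G (x - y) * r (x + m) * r (y + m)))
       = (LINT x|lborel. (LINT y|lborel. G ((x + m) - y) * r (x + m) * r y))" by simp
  also have "\<dots> = (LINT x|lborel. (LINT y|lborel. G (x - y) * r x * r y))"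
    by (rule shift_integral)
  finally show ?thesis .
qed

lemma translate_admissible:
  fixes \<sigma> :: "real \<Rightarrow> real"
  assumes [measurable]: "\<sigma> \<in> borel_measurable borel"
    and nn: "\<forall>x. 0 \<le> \<sigma> x" and i1: "integrable lborel \<sigma>" and m1: "(LINT x|lborel. \<sigma> x) = 1"
    and i2: "integrable lborel (\<lambda>x. (\<sigma> x)\<^sup>2)" and i3: "integrable lborel (\<lambda>x. x * \<sigma> x)"
  defines "m \<equiv> (LINT x|lborel. x * \<sigma> x)"
  shows "admissible (\<lambda>x. \<sigma> (x + m)) \<and> energy \<epsilon> G (\<lambda>x. \<sigma> (x + m)) = energy \<epsilon> G \<sigma>"
proof -
  let ?t = "\<lambda>x. \<sigma> (x + m)"
  have tm: "?t \<in> borel_measurable lborel" by measurable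
  have ti: "integrable lborel ?t" using i1 shift_integrable[of \<sigma> m] by simp
  have t1: "(LINT x|lborel. ?t x) = 1" using m1 shift_integral[of \<sigma> m] by simp
  have t2: "integrable lborel (\<lambda>x. (?t x)\<^sup>2)" using i2 shift_integrable[of "\<lambda>x. (\<sigma> x)\<^sup>2" m] by simp
  have t2e: "(LINT x|lborel. (?t x)\<^sup>2) = (LINT x|lborel. (\<sigma> x)\<^sup>2)" using shift_integral[of "\<lambda>x. (\<sigma> x)\<^sup>2" m] by simp
  have a: "integrable lborel (\<lambda>x. (x + m) * \<sigma> (x + m))" using i3 shift_integrable[of "\<lambda>x. x * \<sigma> x" m] by simp
  have b: "integrable lborel (\<lambda>x. m * \<sigma> (x + m))" using ti by simp
  have eq: "(\<lambda>x. x * ?t x) = (\<lambda>x. (x + m) * \<sigma> (x + m) - m * \<sigma> (x + m))" by (auto simp: algebra_simps)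
  have t3: "integrable lborel (\<lambda>x. x * ?t x)" unfolding eq by (rule Bochner_Integration.integrable_diff[OF a b])
  have "(LINT x|lborel. x * ?t x) = (LINT x|lborel. (x + m) * \<sigma> (x + m)) - (LINT x|lborel. m * \<sigma> (x + m))"
    unfolding eq by (rule Bochner_Integration.integral_diff[OF a b])
  also have "\<dots> = m - m * 1"
    using shift_integral[of "\<lambda>x. x * \<sigma> x" m] t1 by (simp add: m_def)
  finally have t4: "(LINT x|lborel. x * ?t x) = 0" by simp
  have "admissible ?t"
    unfolding admissible_def L2_def prob_density_def using tm ti t1 t2 t3 t4 nn by auto
  moreover have "energy \<epsilon> G ?t = energy \<epsilon> G \<sigma>"
    unfolding energy_def t2e I_shift ..
  ultimately show ?thesis by simp
qed



lemma pol_I_le: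
  fixes \<rho> G :: "real \<Rightarrow> real"
  assumes [measurable]: "\<rho> \<in> borel_measurable borel"
    and nn: "\<forall>x. 0 \<le> \<rho> x" and i1: "integrable lborel \<rho>" and m1: "(LINT x|lborel. \<rho> x) = 1"
    and i2: "integrable lborel (\<lambda>x. (\<rho> x)\<^sup>2)" and i3: "integrable lborel (\<lambda>x. x * \<rho> x)"
    and min: "\<forall>\<sigma>. admissible \<sigma> \<longrightarrow> energy \<epsilon> G \<rho> \<le> energy \<epsilon> G \<sigma>"
  shows "(LINT x|lborel. (LINT y|lborel. G (x - y) * pol a \<rho> x * pol a \<rho> y))
             \<le> (LINT x|lborel. (LINT y|lborel. G (x - y) * \<rho> x * \<rho> y))"
proof -
  let ?s = "pol a \<rho>"
  have snn: "\<forall>x. 0 \<le> ?s x" using pol_cases[of a \<rho>] nn by metis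
  have s1: "integrable lborel ?s" using pol_integrable[of "\<lambda>x. x" \<rho> a] i1 by simp
  have sm1: "(LINT x|lborel. ?s x) = 1" using pol_integral[of "\<lambda>x. x" \<rho> a] i1 m1 by simp
  have s2: "integrable lborel (\<lambda>x. (?s x)\<^sup>2)" using pol_integrable[of "\<lambda>x. x\<^sup>2" \<rho> a] i2 by simp
  have s2e: "(LINT x|lborel. (?s x)\<^sup>2) = (LINT x|lborel. (\<rho> x)\<^sup>2)"
    using pol_integral[of "\<lambda>x. x\<^sup>2" \<rho> a] i2 by simp
  have r3: "integrable lborel (\<lambda>x. x * \<rho> (2*a - x))"
  proof -
    have "integrable lborel (\<lambda>t. 2*a * \<rho> t - t * \<rho> t)"
      using i1 i3 by (intro Bochner_Integration.integrable_diff) auto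
    from reflect_integrable[OF this, of a] show ?thesis by (simp add: algebra_simps)
  qed
  have s3: "integrable lborel (\<lambda>x. x * ?s x)"
  proof (rule Bochner_Integration.integrable_bound)
    show "integrable lborel (\<lambda>x. \<bar>x * \<rho> x\<bar> + \<bar>x * \<rho> (2*a - x)\<bar>)"
      using i3 r3 by (intro Bochner_Integration.integrable_add) auto
    show "(\<lambda>x. x * ?s x) \<in> borel_measurable lborel" by measurable
    show "AE x in lborel. norm (x * ?s x) \<le> norm (\<bar>x * \<rho> x\<bar> + \<bar>x * \<rho> (2*a - x)\<bar>)"
    proof (rule AE_I2)
      fix x show "norm (x * ?s x) \<le> norm (\<bar>x * \<rho> x\<bar> + \<bar>x * \<rho> (2*a - x)\<bar>)"
        using pol_cases[of a \<rho> x] by (elim disjE) auto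
    qed
  qed
  from translate_admissible[OF pol_meas[OF assms(1)] snn s1 sm1 s2 s3, of \<epsilon> G]
  obtain \<tau> where "admissible \<tau>" "energy \<epsilon> G \<tau> = energy \<epsilon> G ?s" by blast
  with min have "energy \<epsilon> G \<rho> \<le> energy \<epsilon> G ?s" by metis
  then show ?thesis unfolding energy_def s2e by simp
qed



lemma G_strict:
  fixes G G' g g' :: "real \<Rightarrow> real"
  assumes G_deriv: "\<forall>x. (G has_real_derivative G' x) (at x)"
    and G_radial: "\<forall>x. G x = g \<bar>x\<bar>"
    and g_deriv: "\<forall>r\<ge>0. (g has_real_derivative g' r) (at r within {0..})"
    and g'_neg: "\<forall>r>0. g' r < 0"
    and st: "0 \<le> s" "s < t"
  shows "G t < G s"
proof -
  obtain z where z: "s < z" "z < t" "G t - G s = (t - s) * G' z"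
    using MVT2[OF st(2), of G G'] G_deriv by blast
  have zp: "z > 0" using z st by linarith
  have "(g has_real_derivative g' z) (at z within {0..})" using g_deriv zp by simp
  moreover have "at z within {0..} = at z"
    by (rule at_within_interior) (use zp in simp)
  ultimately have "(g has_real_derivative g' z) (at z)" by simp
  then have "(G has_real_derivative g' z) (at z)"
    by (rule has_field_derivative_transform_within_open[of _ _ _ "{0<..}"]) (use zp G_radial in auto)
  then have "G' z = g' z" using G_deriv DERIV_unique by blast
  then have "G' z < 0" using g'_neg zp by simp
  then have "(t - s) * G' z < 0" using z st by (simp add: mult_pos_neg)
  then show ?thesis using z by linarith
qed

lemma mean_fold:
  fixes \<rho> :: "real \<Rightarrow> real"
  assumes [measurable]: "\<rho> \<in> borel_measurable borel"
    and i1: "integrable lborel \<rho>" and m1: "(LINT x|lborel. \<rho> x) = 1"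
    and i3: "integrable lborel (\<lambda>x. x * \<rho> x)" and c0: "(LINT x|lborel. x * \<rho> x) = 0"
  shows "integrable lborel (\<lambda>x. indicator {a<..} x * ((x - a) * (\<rho> x - \<rho> (2*a - x))))"
    and "(LINT x|lborel. indicator {a<..} x * ((x - a) * (\<rho> x - \<rho> (2*a - x)))) = - a"
proof -
  have pi: "integrable lborel (\<lambda>x. x * \<rho> x - a * \<rho> x)"
    using i1 i3 by (intro Bochner_Integration.integrable_diff) auto
  have pv: "(LINT x|lborel. x * \<rho> x - a * \<rho> x) = - a"
    using Bochner_Integration.integral_diff[OF i3 Bochner_Integration.integrable_mult_right[OF i1, of a]] c0 m1 by simp
  have eq: "indicator {a<..} x * ((x * \<rho> x - a * \<rho> x) + ((2*a - x) * \<rho> (2*a - x) - a * \<rho> (2*a - x)))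
       = indicator {a<..} x * ((x - a) * (\<rho> x - \<rho> (2*a - x)))" for x
    by (simp add: algebra_simps)
  show "integrable lborel (\<lambda>x. indicator {a<..} x * ((x - a) * (\<rho> x - \<rho> (2*a - x))))"
    using fold_integral(1)[OF pi, of a] unfolding eq .
  show "(LINT x|lborel. indicator {a<..} x * ((x - a) * (\<rho> x - \<rho> (2*a - x)))) = - a"
    using fold_integral(2)[OF pi, of a] unfolding eq pv by simp
qed

theorem proposition4p3:
  fixes \<epsilon> :: real and G G' G'' g g' g'' \<rho> :: "real \<Rightarrow> real"
  assumes eps: "\<epsilon> > 0"
    and G_nonneg: "\<forall>x. 0 \<le> G x"
    and G_supp: "closure {x. G x \<noteq> 0} = UNIV"
    and G_deriv: "\<forall>x. (G has_real_derivative G' x) (at x)"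
    and G_deriv2: "\<forall>x. (G' has_real_derivative G'' x) (at x)"
    and G''_cont: "continuous_on UNIV G''"
    and G_int: "integrable lborel G"
    and G'_int: "integrable lborel G'"
    and G_bdd: "bounded (range G)"
    and G_radial: "\<forall>x. G x = g \<bar>x\<bar>"
    and g_deriv: "\<forall>r\<ge>0. (g has_real_derivative g' r) (at r within {0..})"
    and g_deriv2: "\<forall>r\<ge>0. (g' has_real_derivative g'' r) (at r within {0..})"
    and g'_neg: "\<forall>r>0. g' r < 0"
    and g''0: "g'' 0 < 0"
    and g_lim: "(g \<longlongrightarrow> 0) at_top"
    and G_mass: "(LINT x|lborel. G x) = 1"
    and rho_adm: "admissible \<rho>"
    and rho_min: "\<forall>\<sigma>. admissible \<sigma> \<longrightarrow> energy \<epsilon> G \<rho> \<le> energy \<epsilon> G \<sigma>"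
  shows "\<exists>f. (AE x in lborel. \<rho> x = f x) \<and> (\<forall>x. f (- x) = f x)
            \<and> (\<forall>x y. 0 < x \<longrightarrow> x \<le> y \<longrightarrow> f y \<le> f x)"
proof -
  have "continuous_on UNIV G"
    using G_deriv by (intro continuous_at_imp_continuous_on) (meson DERIV_isCont)
  then have Gm[measurable]: "G \<in> borel_measurable borel" by (rule borel_measurable_continuous_onI)
  obtain M where Gb: "\<forall>x. \<bar>G x\<bar> \<le> M" using G_bdd unfolding bounded_iff by auto
  have Ge: "\<forall>x. G (- x) = G x" using G_radial by simp
  have Gs: "\<forall>s t. 0 \<le> s \<longrightarrow> s < t \<longrightarrow> G t < G s"
    using G_strict[OF G_deriv G_radial g_deriv g'_neg] by blast
  have rm[measurable]: "\<rho> \<in> borel_measurable borel" and nn: "\<forall>x. 0 \<le> \<rho> x"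
    and i1: "integrable lborel \<rho>" and m1: "(LINT x|lborel. \<rho> x) = 1"
    and i2: "integrable lborel (\<lambda>x. (\<rho> x)\<^sup>2)" and i3: "integrable lborel (\<lambda>x. x * \<rho> x)"
    and c0: "(LINT x|lborel. x * \<rho> x) = 0"
    using rho_adm unfolding admissible_def L2_def prob_density_def by auto
  have dich: "(AE x in lborel. a < x \<longrightarrow> \<rho> (2*a - x) \<le> \<rho> x) \<or> (AE x in lborel. a < x \<longrightarrow> \<rho> x \<le> \<rho> (2*a - x))" for a
    by (rule dichotomy[OF Gm rm Gb i1 Ge Gs pol_I_le[OF rm nn i1 m1 i2 i3 rho_min]])
  note MF = mean_fold[OF rm i1 m1 i3 c0]
  have mono: "\<forall>a>0. AE x in lborel. a < x \<longrightarrow> \<rho> x \<le> \<rho> (2*a - x)"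
  proof (intro allI impI)
    fix a :: real assume a: "0 < a"
    show "AE x in lborel. a < x \<longrightarrow> \<rho> x \<le> \<rho> (2*a - x)"
    proof (rule ccontr)
      assume "\<not> ?thesis"
      with dich[of a] have A1: "AE x in lborel. a < x \<longrightarrow> \<rho> (2*a - x) \<le> \<rho> x" by blast
      have "0 \<le> (LINT x|lborel. indicator {a<..} x * ((x - a) * (\<rho> x - \<rho> (2*a - x))))"
        by (rule integral_nonneg_AE) (use A1 in \<open>auto elim!: eventually_mono simp: indicator_def\<close>)
      with MF(2)[of a] a show False by simp
    qed
  qed
  have sym: "AE x in lborel. 0 < x \<longrightarrow> \<rho> x = \<rho> (- x)"
  proof -
    define h where "h x = indicator {0<..} x * (x * (\<rho> x - \<rho> (- x)))" for x
    have hi: "integrable lborel h" using MF(1)[of 0] unfolding h_def by simp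
    have h0: "(LINT x|lborel. h x) = 0" using MF(2)[of 0] unfolding h_def by simp
    have "AE x in lborel. h x = 0"
    proof (cases "AE x in lborel. 0 < x \<longrightarrow> \<rho> (- x) \<le> \<rho> x")
      case True
      have "AE x in lborel. 0 \<le> h x"
        using True
      proof eventually_elim
        case (elim x)
        show ?case
        proof (cases "0 < x")
          case True then show ?thesis using elim by (simp add: h_def)
        qed (simp add: h_def)
      qed
      then show ?thesis using integral_nonneg_eq_0_iff_AE[OF hi] h0 by simp
    next
      case False
      with dich[of 0] have A2: "AE x in lborel. 0 < x \<longrightarrow> \<rho> x \<le> \<rho> (- x)" by simp
      have "AE x in lborel. 0 \<le> - h x"
        using A2
      proof eventually_elim
        case (elim x)
        show ?case
        proof (cases "0 < x")
          case True then show ?thesis using elim by (simp add: h_def mult_le_0_iff)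
        qed (simp add: h_def)
      qed
      moreover have "integrable lborel (\<lambda>x. - h x)" using hi by simp
      ultimately have "AE x in lborel. - h x = 0" using integral_nonneg_eq_0_iff_AE[of lborel "\<lambda>x. - h x"] h0 by simp
      then show ?thesis by simp
    qed
    then show ?thesis by eventually_elim (auto simp: h_def indicator_def)
  qed
  obtain F where F1: "AE x in lborel. 0 < x \<longrightarrow> \<rho> x = F x"
    and F2: "\<forall>x y. 0 < x \<longrightarrow> x \<le> y \<longrightarrow> F y \<le> F x"
    using monotone_rep[OF rm nn i1 mono] by blast
  from F1 obtain N where N: "{x \<in> space lborel. \<not> (0 < x \<longrightarrow> \<rho> x = F x)} \<subseteq> N" "emeasure lborel N = 0" "N \<in> sets lborel"
    by (rule AE_E)
  have [measurable]: "N \<in> sets borel" using N(3) by simp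
  have AN: "AE x in lborel. x \<notin> N" by (rule AE_not_in) (use N in \<open>auto intro: null_setsI\<close>)
  have AN': "AE x in lborel. 0 + (-1) * x \<notin> N"
    by (rule AE_borel_affine[OF _ _ AN]) auto
  have sym': "AE x in lborel. 0 < 0 + (-1) * x \<longrightarrow> \<rho> (0 + (-1) * x) = \<rho> (- (0 + (-1) * x))"
    by (rule AE_borel_affine[OF _ _ sym]) auto
  have "AE x in lborel. \<rho> x = F \<bar>x\<bar>"
    using F1 AN' sym' AE_lborel_singleton[of 0]
  proof eventually_elim
    case (elim x)
    show ?case
    proof (cases "0 < x")
      case True then show ?thesis using elim by simp
    next
      case False
      with elim have xn: "x < 0" by simp
      then have "- x \<notin> N" using elim by simp
      have "\<rho> (- x) = F (- x)"
      proof (rule ccontr)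
        assume "\<rho> (- x) \<noteq> F (- x)"
        then have "- x \<in> {x \<in> space lborel. \<not> (0 < x \<longrightarrow> \<rho> x = F x)}" using xn by simp
        with N(1) \<open>- x \<notin> N\<close> show False by blast
      qed
      moreover have "\<rho> x = \<rho> (- x)" using elim xn by simp
      ultimately show ?thesis using xn by simp
    qed
  qed
  moreover have "\<forall>x. F \<bar>- x\<bar> = F \<bar>x\<bar>" by simp
  moreover have "\<forall>x y. 0 < x \<longrightarrow> x \<le> y \<longrightarrow> F \<bar>y\<bar> \<le> F \<bar>x\<bar>" using F2 by simp
  ultimately show ?thesis by (intro exI[of _ "\<lambda>x. F \<bar>x\<bar>"]) auto
qed


end
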